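(* Let $n$, $k$, $t$ be positive integers with $k\geq t+2$ and $n\geq 2k+1+\delta_{2,q}$. For positive integers $x$ define $$f(n,k,t,x)={x\brack t}{k-t+1\brack 1}^{x-t}{n-x\brack k-x}+{x\brack t}\sum_{i=0}^{x-t-1}{k-t+1\brack 1}^{i}.$$ Then $f(n,k,t,x)>f(n,k,t,x+1)$ for every $x\in\{t+1,\ldots,k-1\}$.
   Context: $q$ is a prime power and ${m\brack r}$ denotes the Gaussian binomial coefficient $\prod_{i=0}^{r-1}\frac{q^{m-i}-1}{q^{r-i}-1}$ (equal to $1$ for $r=0$). $\delta_{a,b}$ is the Kronecker delta. *)

theory Defs
  imports Complex_Main "HOL-Computational_Algebra.Primes"
begin

definition gauss_binom :: "nat \<Rightarrow> nat \<Rightarrow> nat \<Rightarrow> real" where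
  "gauss_binom q m r = (\<Prod>i<r. (real q ^ (m - i) - 1) / (real q ^ (r - i) - 1))"

definition kdelta :: "nat \<Rightarrow> nat \<Rightarrow> nat" where
  "kdelta a b = (if a = b then 1 else 0)"

definition fnktx :: "nat \<Rightarrow> nat \<Rightarrow> nat \<Rightarrow> nat \<Rightarrow> nat \<Rightarrow> real" where
  "fnktx q n k t x =
     gauss_binom q x t * gauss_binom q (k - t + 1) 1 ^ (x - t) * gauss_binom q (n - x) (k - x)
     + gauss_binom q x t * (\<Sum>i=0..<x - t. gauss_binom q (k - t + 1) 1 ^ i)"

end

theory Submission
  imports Defs
begin

lemma gb_ge1:
  assumes "real q \<ge> 2" "r \<le> m"
  shows "gauss_binom q m r \<ge> 1"
  unfolding gauss_binom_def
proof (rule prod_ge_1)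
  fix i assume "i \<in> {..<r}"
  hence i: "i < r" by simp
  have "real q ^ (r - i) > 1" using assms(1) i by (intro one_less_power) auto
  moreover have "real q ^ (r - i) \<le> real q ^ (m - i)" using assms i by (intro power_increasing) auto
  ultimately show "1 \<le> (real q ^ (m - i) - 1) / (real q ^ (r - i) - 1)" by simp
qed

lemma gb_num:
  "gauss_binom q m r = (\<Prod>i<r. real q ^ (m - i) - 1) / (\<Prod>i<r. real q ^ (r - i) - 1)"
  unfolding gauss_binom_def by (rule prod_dividef)

lemma num_shift:
  "t \<le> x \<Longrightarrow> (\<Prod>i<t. (Q::real) ^ (x + 1 - i) - 1) * (Q ^ (x + 1 - t) - 1)
      = (\<Prod>i<t. Q ^ (x - i) - 1) * (Q ^ (x + 1) - 1)"
proof (induction t)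
  case 0 then show ?case by simp
next
  case (Suc t)
  have e: "x + 1 - Suc t = x - t" "x + 1 - t = Suc (x - t)" using Suc.prems by auto
  have "(\<Prod>i<Suc t. Q ^ (x + 1 - i) - 1) * (Q ^ (x + 1 - Suc t) - 1)
     = ((\<Prod>i<t. Q ^ (x + 1 - i) - 1) * (Q ^ (x + 1 - t) - 1)) * (Q ^ (x - t) - 1)"
    by (simp add: e(1) mult_ac)
  also have "\<dots> = (\<Prod>i<t. Q ^ (x - i) - 1) * (Q ^ (x + 1) - 1) * (Q ^ (x - t) - 1)"
    using Suc by simp
  also have "\<dots> = (\<Prod>i<Suc t. Q ^ (x - i) - 1) * (Q ^ (x + 1) - 1)" by (simp add: mult_ac)
  finally show ?case .
qed

lemma gb_step_top:
  "t \<le> x \<Longrightarrow> gauss_binom q (x+1) t * (real q ^ (x+1-t) - 1) = gauss_binom q x t * (real q ^ (x+1) - 1)"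
  unfolding gb_num using num_shift[of t x "real q"] by (simp add: field_simps)

lemma gb_step_both:
  "gauss_binom q M (Suc R) = (real q ^ M - 1) / (real q ^ Suc R - 1) * gauss_binom q (M - 1) R"
  unfolding gauss_binom_def prod.lessThan_Suc_shift
  by (simp add: diff_diff_left)

lemma key_alg:
  fixes G r A B2 D S P :: real
  assumes "G > 0" "r > 1" "A \<ge> 7" "B2 \<ge> 1" "D * (A - 1) \<ge> r * A^2" "S * (A - 1) = P - 1" "P \<ge> 1"
  shows "G * (P * (D * B2) + S) > G * r * (P * A * B2 + (S + P))"
proof -
  have A1: "A - 1 > 0" using assms by simp
  have "D \<ge> r * A^2 / (A - 1)" using assms(5) A1 by (simp add: pos_divide_le_eq)
  have DrA: "D - r * A \<ge> r * A / (A - 1)"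
  proof -
    have "r * A^2 / (A - 1) - r * A = r * A / (A - 1)" using A1 by (simp add: field_simps power2_eq_square)
    thus ?thesis using \<open>D \<ge> r * A^2 / (A - 1)\<close> by linarith
  qed
  have "r * A / (A - 1) > 0" using assms A1 by simp
  hence "(B2 - 1) * (D - r * A) \<ge> 0" using assms(4) DrA by (intro mult_nonneg_nonneg) auto
  hence h1: "B2 * (D - r * A) \<ge> D - r * A" by (simp add: algebra_simps)
  have h2: "D * B2 - r * A * B2 - r \<ge> r / (A - 1)"
  proof -
    have "D * B2 - r * A * B2 - r = B2 * (D - r * A) - r" by (simp add: algebra_simps)
    also have "\<dots> \<ge> r * A^2 / (A - 1) - r * A - r" using h1 \<open>D \<ge> r * A^2 / (A - 1)\<close> by linarith
    also have "r * A^2 / (A - 1) - r * A - r = r / (A - 1)" using A1 by (simp add: field_simps power2_eq_square)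
    finally show ?thesis .
  qed
  have S: "S = (P - 1) / (A - 1)" using assms(6) A1 by (simp add: field_simps)
  have "(r - 1) * S < (r - 1) * (P / (A - 1))"
    using assms A1 S by (intro mult_strict_left_mono) (auto simp: divide_strict_right_mono)
  also have "\<dots> = P * ((r - 1) / (A - 1))" by simp
  also have "\<dots> < P * (r / (A - 1))" using assms A1 by (intro mult_strict_left_mono divide_strict_right_mono) auto
  also have "\<dots> \<le> P * (D * B2 - r * A * B2 - r)" using assms h2 by (intro mult_left_mono) auto
  finally have "(r - 1) * S < P * (D * B2 - r * A * B2 - r)" .
  hence "r * (P * A * B2 + (S + P)) < P * (D * B2) + S" by (simp add: algebra_simps)
  thus ?thesis using assms(1) by (simp add: mult.assoc)
qed

theorem lemma2p3:
  fixes q n k t x :: nat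
  assumes "\<exists>p e. prime p \<and> e \<ge> 1 \<and> q = p ^ e"
    and "n > 0" "k > 0" "t > 0"
    and "k \<ge> t + 2"
    and "n \<ge> 2 * k + 1 + kdelta 2 q"
    and "t + 1 \<le> x" "x \<le> k - 1"
  shows "fnktx q n k t x > fnktx q n k t (x + 1)"
proof -
  obtain p e where pe: "prime p" "e \<ge> 1" "q = p ^ e" using assms(1) by blast
  have "p \<ge> 2" using pe(1) prime_ge_2_nat by blast
  hence "p ^ e \<ge> 2 ^ e" by (simp add: power_mono)
  moreover have "(2::nat) ^ e \<ge> 2 ^ 1" using pe(2) by (intro power_increasing) auto
  ultimately have q2: "q \<ge> 2" using pe(3) by simp
  define Q where "Q = real q"
  have Q2: "Q \<ge> 2" using q2 by (simp add: Q_def)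
  define m where "m = x - t"
  have xm: "x + 1 - t = Suc m" using assms by (simp add: m_def)
  define G where "G = gauss_binom q x t"
  have G: "G \<ge> 1" unfolding G_def using q2 assms by (intro gb_ge1) auto
  define A where "A = gauss_binom q (k - t + 1) 1"
  have A_eq: "A = (Q ^ (k - t + 1) - 1) / (Q - 1)" by (simp add: A_def gauss_binom_def Q_def)
  define B2 where "B2 = gauss_binom q (n - (x + 1)) (k - (x + 1))"
  have B2: "B2 \<ge> 1" unfolding B2_def using q2 assms by (intro gb_ge1) auto
  define D where "D = (Q ^ (n - x) - 1) / (Q ^ (k - x) - 1)"
  have kx: "k - x = Suc (k - (x + 1))" using assms by simp
  have B1: "gauss_binom q (n - x) (k - x) = D * B2"
  proof -
    have "gauss_binom q (n - x) (Suc (k - (x + 1))) = (real q ^ (n - x) - 1) / (real q ^ Suc (k - (x + 1)) - 1) * gauss_binom q (n - x - 1) (k - (x + 1))"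
      by (rule gb_step_both)
    moreover have "n - x - 1 = n - (x + 1)" by simp
    ultimately show ?thesis unfolding B2_def D_def Q_def kx by simp
  qed
  define r where "r = (Q ^ (x + 1) - 1) / (Q ^ (x + 1 - t) - 1)"
  have Qa2: "Q ^ (x + 1 - t) \<ge> Q ^ 2" using Q2 assms by (intro power_increasing) auto
  have Qa4: "Q ^ (x + 1 - t) \<ge> 4" proof -
    have "(2::real)^2 \<le> Q^2" using Q2 by (intro power_mono) auto
    thus ?thesis using Qa2 by simp
  qed
  have G1: "gauss_binom q (x + 1) t = G * r"
  proof -
    have "gauss_binom q (x + 1) t * (Q ^ (x + 1 - t) - 1) = G * (Q ^ (x + 1) - 1)"
      unfolding G_def Q_def using assms by (intro gb_step_top) auto
    thus ?thesis using Qa4 unfolding r_def by (simp add: field_simps)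
  qed
  define S where "S = (\<Sum>i=0..<m. A ^ i)"
  have S1: "(\<Sum>i=0..<x + 1 - t. A ^ i) = S + A ^ m" unfolding S_def xm by simp
  have SA: "S * (A - 1) = A ^ m - 1" unfolding S_def atLeast0LessThan
    by (simp add: power_diff_1_eq mult.commute)
  have f1: "fnktx q n k t x = G * (A ^ m * (D * B2) + S)"
    unfolding fnktx_def B1 by (simp add: G_def A_def S_def m_def algebra_simps)
  have f2: "fnktx q n k t (x + 1) = G * r * (A ^ m * A * B2 + (S + A ^ m))"
  proof -
    have "fnktx q n k t (x + 1) = G * r * A ^ (Suc m) * B2 + G * r * (\<Sum>i=0..<Suc m. A ^ i)"
      unfolding fnktx_def G1 A_def[symmetric] B2_def[symmetric] xm by simp
    also have "(\<Sum>i=0..<Suc m. A ^ i) = S + A ^ m" unfolding S_def by simp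
    finally show ?thesis by (simp add: algebra_simps)
  qed
  show ?thesis unfolding f1 f2
  proof (rule key_alg)
    show "G > 0" using G by simp
    have Qa3: "Q ^ (x + 1 - t) > 1" using Qa4 by simp
    have "Q ^ (x + 1 - t) < Q ^ (x + 1)" using Q2 assms by (intro power_strict_increasing) auto
    thus "r > 1" unfolding r_def using Qa3 by (simp add: less_divide_eq_1_pos)
    have Qk: "Q ^ (k - t + 1) \<ge> Q ^ 3" using Q2 assms by (intro power_increasing) auto
    have "(Q - 1) * (Q - 2) * (Q + 3) \<ge> 0" using Q2 by (intro mult_nonneg_nonneg) auto
    hence "Q ^ 3 \<ge> 7 * Q - 6" by (simp add: algebra_simps power3_eq_cube)
    hence "Q ^ (k - t + 1) - 1 \<ge> 7 * (Q - 1)" using Qk by simp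
    thus A7: "A \<ge> 7" unfolding A_eq using Q2 by (simp add: pos_le_divide_eq)
    thus "A ^ m \<ge> 1" by simp
    show "B2 \<ge> 1" by (rule B2)
    show "S * (A - 1) = A ^ m - 1" by (rule SA)
    have Qpos: "Q > 0" using Q2 by simp
    have hA1: "A * (Q - 1) \<le> Q ^ (k - t + 1)" unfolding A_eq using Q2 by simp
    have hr: "r \<le> 4/3 * Q ^ t"
    proof -
      have e: "Q ^ (x + 1) = Q ^ t * Q ^ (x + 1 - t)"
        using assms by (simp flip: power_add)
      have "Q ^ t * Q ^ (x + 1 - t) \<ge> Q ^ t * 4" using Qa4 Qpos by (intro mult_left_mono) auto
      hence "Q ^ (x + 1) - 1 \<le> 4/3 * Q ^ t * (Q ^ (x + 1 - t) - 1)" unfolding e by (simp add: algebra_simps)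
      thus ?thesis unfolding r_def using Qa4 by (simp add: pos_divide_le_eq)
    qed
    have hD: "D \<ge> Q ^ (n - k)"
    proof -
      have e: "Q ^ (n - x) = Q ^ (n - k) * Q ^ (k - x)"
        using assms by (simp flip: power_add)
      have "Q ^ (k - x) > 1" using Q2 assms by (intro one_less_power) auto
      moreover have "Q ^ (n - k) \<ge> 1" using Q2 by simp
      ultimately show ?thesis unfolding D_def e by (simp add: pos_le_divide_eq algebra_simps)
    qed
    have hA2: "A ^ 2 \<le> 7/6 * (A * (A - 1))"
    proof -
      have "A * (A - 7) \<ge> 0" using A7 by simp
      thus ?thesis by (simp add: algebra_simps power2_eq_square)
    qed
    have "r * A ^ 2 \<le> (4/3 * Q ^ t) * (7/6 * (A * (A - 1)))"
      using hr hA2 A7 \<open>r > 1\<close> by (intro mult_mono) auto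
    also have "\<dots> = (A - 1) * (14/9 * (Q ^ t * A))" by (simp add: field_simps)
    also have "\<dots> \<le> (A - 1) * Q ^ (n - k)"
    proof (rule mult_left_mono)
      show "0 \<le> A - 1" using A7 by simp
      have e: "Q ^ (k + 1) = Q ^ t * Q ^ (k - t + 1)" using assms by (simp flip: power_add)
      have "Q ^ t * (A * (Q - 1)) \<le> Q ^ t * Q ^ (k - t + 1)" using hA1 Qpos by (intro mult_left_mono) auto
      hence h1: "14/9 * (Q ^ t * A) * (Q - 1) \<le> 14/9 * Q ^ (k + 1)" unfolding e by (simp add: algebra_simps)
      have h2: "14/9 * Q ^ (k + 1) \<le> Q ^ (n - k) * (Q - 1)"
      proof (cases "q = 2")
        case True
        hence "n - k \<ge> k + 2" using assms(6) by (simp add: kdelta_def)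
        hence "Q ^ (n - k) \<ge> Q ^ (k + 2)" using Q2 by (intro power_increasing) auto
        thus ?thesis using True by (simp add: Q_def) (use zero_le_power[of "2::real" k] in linarith)
      next
        case False
        hence "Q \<ge> 3" using q2 by (simp add: Q_def)
        have "n - k \<ge> k + 1" using assms(6) by simp
        hence "Q ^ (n - k) \<ge> Q ^ (k + 1)" using Q2 by (intro power_increasing) auto
        moreover have "Q ^ (k + 1) \<ge> 0" using Qpos by simp
        ultimately have "Q ^ (n - k) * (Q - 1) \<ge> Q ^ (k + 1) * 2" using \<open>Q \<ge> 3\<close>
          by (intro mult_mono) auto
        thus ?thesis using \<open>Q ^ (k + 1) \<ge> 0\<close> by linarith
      qed
      have "14/9 * (Q ^ t * A) * (Q - 1) \<le> Q ^ (n - k) * (Q - 1)" using h1 h2 by linarith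
      thus "14/9 * (Q ^ t * A) \<le> Q ^ (n - k)" using Q2 by simp
    qed
    also have "\<dots> \<le> (A - 1) * D" using hD A7 by (intro mult_left_mono) auto
    finally show "D * (A - 1) \<ge> r * A^2" by (simp add: mult.commute)
  qed
qed

end
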